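(* Let $k,r\geq 1$, let $1\leq m\leq k$, let $1\le d\le r$, and let $I_d\subseteq\{1,\dots,r\}$ with $|I_d|=d$. Then for every $n\geq k$, $$\bigl|S_n^{(r)}\bigl(T_{k,r}^m(I_d)\bigr)\bigr|=(k-1)!\,r^{k-1}\prod_{j=k}^n\bigl((r-d)j+(k-1)d\bigr).$$
   Context: For $n,r\ge1$, $S_n^{(r)}$ denotes the set of coloured permutations of length $n$ with $r$ colours: sequences $\phi=(\phi_1,\dots,\phi_n)$ where $\phi_i=a_i^{(c_i)}$, $(a_1,\dots,a_n)$ is a permutation of $\{1,\dots,n\}$ and each $c_i\in\{1,\dots,r\}$ is the colour of $a_i$; so $|S_n^{(r)}|=n!\,r^n$. Write $|\phi|=(a_1,\dots,a_n)$. For $\phi=(\tau_1^{(s_1)},\dots,\tau_k^{(s_k)})\in S_k^{(r)}$ and $\psi=(\alpha_1^{(v_1)},\dots,\alpha_n^{(v_n)})\in S_n^{(r)}$, an occurrence of $\phi$ in $\psi$ is a sequence of indices $1\le i_1<\dots<i_k\le n$ such that $(\alpha_{i_1},\dots,\alpha_{i_k})$ is order-isomorphic to $(\tau_1,\dots,\tau_k)$ and $v_{i_j}=s_j$ for all $j=1,\dots,k$. $\psi$ contains $\phi$ if there is at least one occurrence, and avoids $\phi$ otherwise. For a set $T$ of coloured patterns, $S_n^{(r)}(T)$ is the set of $\psi\in S_n^{(r)}$ avoiding every $\phi\in T$. For $I_d\subseteq\{1,\dots,r\}$ with $|I_d|=d$ and $1\le m\le k$, $T_{k,r}^m(I_d)$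 is the set of all $\phi\in S_k^{(r)}$ whose first entry is $\phi_1=m^{(c)}$ for some colour $c\in I_d$. *)

theory Defs
  imports Main
begin

definition coloured_perms :: "nat \<Rightarrow> nat \<Rightarrow> (nat \<times> nat) list set" where
  "coloured_perms n r = {phi. length phi = n \<and> set (map fst phi) = {1..n}
      \<and> distinct (map fst phi) \<and> (\<forall>p \<in> set phi. snd p \<in> {1..r})}"

definition order_iso :: "nat list \<Rightarrow> nat list \<Rightarrow> bool" where
  "order_iso xs ys \<longleftrightarrow> length xs = length ys \<and>
     (\<forall>i < length xs. \<forall>j < length xs. (xs ! i < xs ! j \<longleftrightarrow> ys ! i < ys ! j))"

text \<open>An occurrence of phi (length k) in psi: strictly increasing indices
  i_1 < ... < i_k (0-based, below length psi) with order-isomorphic letters and equal colours.\<close>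
definition occurrence :: "(nat \<times> nat) list \<Rightarrow> (nat \<times> nat) list \<Rightarrow> nat list \<Rightarrow> bool" where
  "occurrence phi psi idx \<longleftrightarrow> length idx = length phi \<and> sorted_wrt (<) idx
     \<and> (\<forall>i \<in> set idx. i < length psi)
     \<and> order_iso (map (\<lambda>i. fst (psi ! i)) idx) (map fst phi)
     \<and> (\<forall>j < length phi. snd (psi ! (idx ! j)) = snd (phi ! j))"

definition contains :: "(nat \<times> nat) list \<Rightarrow> (nat \<times> nat) list \<Rightarrow> bool" where
  "contains psi phi \<longleftrightarrow> (\<exists>idx. occurrence phi psi idx)"

definition avoiding :: "nat \<Rightarrow> nat \<Rightarrow> (nat \<times> nat) list set \<Rightarrow> (nat \<times> nat) list set" where
  "avoiding n r T = {psi \<in> coloured_perms n r. \<forall>phi \<in> T. \<not> contains psi phi}"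

definition T_set :: "nat \<Rightarrow> nat \<Rightarrow> nat \<Rightarrow> nat set \<Rightarrow> (nat \<times> nat) list set" where
  "T_set k r m I = {phi \<in> coloured_perms k r. k \<ge> 1 \<and> fst (hd phi) = m \<and> snd (hd phi) \<in> I}"

end

theory Submission
  imports Defs
begin


definition rank :: "nat set \<Rightarrow> nat \<Rightarrow> nat" where
  "rank W v = card {w\<in>W. w < v}"

lemma rank_less: "finite W \<Longrightarrow> v \<in> W \<Longrightarrow> v < v' \<Longrightarrow> rank W v < rank W v'"
  unfolding rank_def by (rule psubset_card_mono) auto

lemma rank_le: "finite W \<Longrightarrow> v \<le> v' \<Longrightarrow> rank W v \<le> rank W v'"
  unfolding rank_def by (rule card_mono) auto

lemma rank_less_iff: "finite W \<Longrightarrow> v \<in> W \<Longrightarrow> v' \<in> W \<Longrightarrow> rank W v < rank W v' \<longleftrightarrow> v < v'"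
proof
  assume "finite W" "v \<in> W" "v' \<in> W" "rank W v < rank W v'"
  then show "v < v'" using rank_le[of W v' v] by (metis leD not_less)
next
  assume "finite W" "v \<in> W" "v' \<in> W" "v < v'"
  then show "rank W v < rank W v'" by (simp add: rank_less)
qed

lemma rank_inj: "finite W \<Longrightarrow> inj_on (rank W) W"
  by (metis inj_onI less_irrefl_nat linorder_neqE_nat rank_less)

lemma rank_bound: "finite W \<Longrightarrow> v \<in> W \<Longrightarrow> rank W v < card W"
  unfolding rank_def by (rule psubset_card_mono) auto

lemma rank_image: "finite W \<Longrightarrow> rank W ` W = {..<card W}"
proof -
  assume f: "finite W"
  have s: "rank W ` W \<subseteq> {..<card W}" using rank_bound[OF f] by auto
  have "card (rank W ` W) = card W" using card_image[OF rank_inj[OF f]] .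
  then show ?thesis using s by (metis card_lessThan card_subset_eq finite_lessThan)
qed

lemma rank_bij: "finite W \<Longrightarrow> bij_betw (rank W) W {..<card W}"
  by (simp add: bij_betw_def rank_image rank_inj)

lemma occ_shift: "occurrence phi rest idx \<Longrightarrow> occurrence phi (p#rest) (map Suc idx)"
  unfolding occurrence_def by (auto simp: sorted_wrt_map o_def)

lemma occ_unshift:
  assumes "occurrence phi (p#rest) idx" "\<forall>i\<in>set idx. i \<noteq> 0"
  shows "occurrence phi rest (map (\<lambda>i. i - 1) idx)"
proof -
  have e: "map (\<lambda>i. fst ((p#rest) ! i)) idx = map (\<lambda>i. fst (rest ! i)) (map (\<lambda>i. i - 1) idx)"
    using assms(2) by (auto simp: nth_Cons')
  have s: "sorted_wrt (<) (map (\<lambda>i. i - 1) idx)"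
    using assms unfolding occurrence_def sorted_wrt_map
    by (auto elim!: sorted_wrt_mono_rel[rotated])
  have o: "length idx = length phi" "\<forall>i\<in>set idx. i < length (p#rest)"
    "order_iso (map (\<lambda>i. fst ((p#rest) ! i)) idx) (map fst phi)"
    "\<forall>j<length phi. snd ((p#rest) ! (idx ! j)) = snd (phi ! j)"
    using assms(1) unfolding occurrence_def by auto
  have b: "\<forall>i\<in>set (map (\<lambda>i. i - 1) idx). i < length rest"
  proof
    fix i assume "i \<in> set (map (\<lambda>i. i - 1) idx)"
    then obtain i0 where "i0 \<in> set idx" "i = i0 - 1" by auto
    then show "i < length rest" using o(2) assms(2) by fastforce
  qed
  have c: "\<forall>j<length phi. snd (rest ! (map (\<lambda>i. i - 1) idx ! j)) = snd (phi ! j)"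
  proof (intro allI impI)
    fix j assume j: "j < length phi"
    then have "idx ! j \<in> set idx" using o(1) by (metis nth_mem)
    then have "idx ! j \<noteq> 0" using assms(2) by blast
    then have "(p#rest) ! (idx ! j) = rest ! (idx ! j - 1)" by (simp add: nth_Cons')
    moreover have "snd ((p#rest) ! (idx ! j)) = snd (phi ! j)" using o(4) j by blast
    ultimately show "snd (rest ! (map (\<lambda>i. i - 1) idx ! j)) = snd (phi ! j)"
      using j o(1) by simp
  qed
  show ?thesis unfolding occurrence_def using o(1,3) e s b c by simp
qed

lemma bij_filter: "bij_betw f A B \<Longrightarrow> bij_betw f {a\<in>A. P (f a)} {b\<in>B. P b}"
  unfolding bij_betw_def by (auto intro: inj_on_subset)

lemma bij_filter_card: "bij_betw f A B \<Longrightarrow> card {a\<in>A. P (f a)} = card {b\<in>B. P b}"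
  using bij_betw_same_card bij_filter by blast


lemma count_from_occ:
  assumes dist: "distinct (map fst ((x,c)#rest))"
  and phi: "phi \<in> coloured_perms k r" "fst (hd phi) = m" "k \<ge> 1" and mk: "m \<le> k"
  and occ: "occurrence phi ((x,c)#rest) idx" and z: "idx ! 0 = 0"
  shows "m - 1 \<le> card {y\<in>fst ` set rest. y < x} \<and> k - m \<le> card {y\<in>fst ` set rest. x < y}"
proof -
  let ?psi = "(x,c)#rest"
  have lp: "length phi = k" "length idx = k"
    using phi occ unfolding coloured_perms_def occurrence_def by auto
  have dphi: "distinct (map fst phi)" and sphi: "set (map fst phi) = {1..k}"
    using phi unfolding coloured_perms_def by auto
  define h where "h j = fst (?psi ! (idx ! j))" for j
  have oi: "h i < h j \<longleftrightarrow> fst (phi!i) < fst (phi!j)" if "i<k" "j<k" for i j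
    using occ that lp unfolding occurrence_def order_iso_def h_def by auto
  have h0: "h 0 = x" using z by (simp add: h_def)
  have "phi \<noteq> []" using lp phi(3) by auto
  then have phi0: "fst (phi!0) = m" using phi(2) by (simp add: hd_conv_nth)
  have srt: "sorted_wrt (<) idx" using occ unfolding occurrence_def by auto
  have bnd: "idx ! j < length ?psi" if "j < k" for j
    using occ that lp unfolding occurrence_def by auto
  have pos: "idx ! j > 0" if "0 < j" "j < k" for j
    using sorted_wrt_nth_less[OF srt, of 0 j] that lp z by auto
  have hin: "h j \<in> fst ` set rest" if "0 < j" "j < k" for j
  proof -
    have "idx ! j - 1 < length rest" using bnd[OF that(2)] pos[OF that] by auto
    moreover have "h j = fst (rest ! (idx ! j - 1))"
      using pos[OF that] by (simp add: h_def nth_Cons')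
    ultimately show ?thesis by auto
  qed
  have bphi: "bij_betw (\<lambda>j. fst (phi ! j)) {..<k} {1..k}"
  proof -
    have "bij_betw ((!) (map fst phi)) {..<k} {1..k}"
      by (rule bij_betw_nth) (use dphi sphi lp in auto)
    then show ?thesis by (rule bij_betw_cong[THEN iffD1, rotated]) (auto simp: lp)
  qed
  have hinj: "inj_on h {..<k}"
  proof (rule inj_onI)
    fix i j assume ij: "i \<in> {..<k}" "j \<in> {..<k}" "h i = h j"
    then have "\<not> fst (phi!i) < fst (phi!j)" "\<not> fst (phi!j) < fst (phi!i)"
      using oi[of i j] oi[of j i] by auto
    then have "fst (phi!i) = fst (phi!j)" by simp
    then show "i = j" using bphi ij unfolding bij_betw_def inj_on_def by blast
  qed
  define L where "L = {j\<in>{..<k}. fst (phi!j) < m}"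
  define G where "G = {j\<in>{..<k}. m < fst (phi!j)}"
  have cL: "card L = m - 1"
  proof -
    have "{v\<in>{1..k}. v<m} = {1..<m}" using mk by auto
    then show ?thesis using bij_filter_card[OF bphi, of "\<lambda>v. v < m"] unfolding L_def by simp
  qed
  have cG: "card G = k - m"
  proof -
    have "{v\<in>{1..k}. m<v} = {m<..k}" using mk by auto
    then show ?thesis using bij_filter_card[OF bphi, of "\<lambda>v. m < v"] unfolding G_def by simp
  qed
  have k0: "0 < k" using phi by simp
  have sL: "h ` L \<subseteq> {y\<in>fst ` set rest. y < x}"
  proof
    fix y assume "y \<in> h ` L"
    then obtain j where j: "j < k" "fst (phi!j) < m" "y = h j" unfolding L_def by auto
    then have "j \<noteq> 0" by (metis j(2) phi0 less_irrefl)
    then show "y \<in> {y\<in>fst ` set rest. y < x}"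
      using hin[of j] j oi[of j 0] k0 phi0 h0 by auto
  qed
  have sG: "h ` G \<subseteq> {y\<in>fst ` set rest. x < y}"
  proof
    fix y assume "y \<in> h ` G"
    then obtain j where j: "j < k" "m < fst (phi!j)" "y = h j" unfolding G_def by auto
    then have "j \<noteq> 0" by (metis j(2) phi0 less_irrefl)
    then show "y \<in> {y\<in>fst ` set rest. x < y}"
      using hin[of j] j oi[of 0 j] k0 phi0 h0 by auto
  qed
  have "card (h ` L) = card L" by (rule card_image, rule inj_on_subset[OF hinj]) (auto simp: L_def)
  moreover have "card (h ` G) = card G" by (rule card_image, rule inj_on_subset[OF hinj]) (auto simp: G_def)
  moreover have "card (h ` L) \<le> card {y\<in>fst ` set rest. y < x}" by (rule card_mono[OF _ sL]) simp
  moreover have "card (h ` G) \<le> card {y\<in>fst ` set rest. x < y}" by (rule card_mono[OF _ sG]) simp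
  ultimately show ?thesis using cL cG by simp
qed



lemma occ_from_count:
  assumes dist: "distinct (map fst ((x,c)#rest))"
  and col: "\<forall>p\<in>set ((x,c)#rest). snd p \<in> {1..r}"
  and cI: "c \<in> I" and m1: "1 \<le> m" and mk: "m \<le> k"
  and cnt: "m - 1 \<le> card {y\<in>fst ` set rest. y < x}" "k - m \<le> card {y\<in>fst ` set rest. x < y}"
  shows "\<exists>phi\<in>T_set k r m I. contains ((x,c)#rest) phi"
proof -
  let ?psi = "(x,c)#rest"
  let ?V = "fst ` set rest"
  obtain A where A: "A \<subseteq> {y\<in>?V. y < x}" "card A = m - 1" "finite A"
    using obtain_subset_with_card_n[OF cnt(1)] by blast
  obtain B where B: "B \<subseteq> {y\<in>?V. x < y}" "card B = k - m" "finite B"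
    using obtain_subset_with_card_n[OF cnt(2)] by blast
  define W where "W = insert x (A \<union> B)"
  have fW: "finite W" using A B by (simp add: W_def)
  have Alt: "\<And>a. a \<in> A \<Longrightarrow> a < x \<and> a \<in> fst ` set rest" using A(1) by blast
  have Bgt: "\<And>b. b \<in> B \<Longrightarrow> x < b \<and> b \<in> fst ` set rest" using B(1) by blast
  have "x \<notin> A \<union> B" using Alt Bgt by blast
  moreover have "A \<inter> B = {}" using Alt Bgt by (meson disjoint_iff less_asym)
  ultimately have cW: "card W = k" unfolding W_def using A(2,3) B(2,3) m1 mk
    by (simp add: card_Un_disjoint)
  have WA: "{w\<in>W. w < x} = A"
  proof
    show "{w\<in>W. w < x} \<subseteq> A" unfolding W_def using Bgt by force
    show "A \<subseteq> {w\<in>W. w < x}" unfolding W_def using Alt by blast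
  qed
  have Wsub: "W \<subseteq> fst ` set ?psi" unfolding W_def using Alt Bgt by force
  define f where "f i = fst (?psi ! i)" for i
  have bf: "bij_betw f {..<length ?psi} (fst ` set ?psi)"
  proof -
    have "bij_betw ((!) (map fst ?psi)) {..<length ?psi} (fst ` set ?psi)"
      by (rule bij_betw_nth) (use dist in auto)
    then show ?thesis by (rule bij_betw_cong[THEN iffD1, rotated]) (auto simp: f_def nth_Cons' split: nat.split)
  qed
  define P where "P = {i\<in>{..<length ?psi}. f i \<in> W}"
  have bP: "bij_betw f P W"
  proof -
    have "bij_betw f P {v\<in>fst ` set ?psi. v \<in> W}" unfolding P_def by (rule bij_filter[OF bf])
    moreover have "{v\<in>fst ` set ?psi. v \<in> W} = W" using Wsub by auto
    ultimately show ?thesis by simp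
  qed
  have fP: "finite P" unfolding P_def by simp
  have cP: "card P = k" using bij_betw_same_card[OF bP] cW by simp
  have P0: "0 \<in> P" unfolding P_def W_def f_def by simp
  define idx where "idx = sorted_list_of_set P"
  have sidx: "set idx = P" "distinct idx" "length idx = k" "sorted_wrt (<) idx"
    using fP cP unfolding idx_def by (auto simp: strict_sorted_iff)
  have "Min P = 0" using P0 fP by (intro Min_eqI) auto
  then have idx0: "idx = 0 # sorted_list_of_set (P - {0})"
    unfolding idx_def using sorted_list_of_set_nonempty[OF fP] P0 by auto
  define g where "g i = (Suc (rank W (f i)), snd (?psi ! i))" for i
  define phi where "phi = map g idx"
  have lphi: "length phi = k" using sidx by (simp add: phi_def)
  have mfphi: "map fst phi = map (Suc \<circ> rank W \<circ> f) idx"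
    by (simp add: phi_def g_def o_def)
  have injc: "inj_on (Suc \<circ> rank W \<circ> f) P"
  proof -
    have "inj_on (Suc \<circ> rank W) (f ` P)"
      using rank_inj[OF fW] bij_betw_imp_surj_on[OF bP] by (simp add: inj_on_def)
    moreover have "inj_on f P" using bP by (simp add: bij_betw_def)
    ultimately show ?thesis by (metis comp_assoc comp_inj_on)
  qed
  have setphi: "set (map fst phi) = {1..k}"
  proof -
    have "set (map fst phi) = Suc ` rank W ` f ` P" using sidx mfphi by (simp add: image_comp)
    also have "\<dots> = Suc ` {..<k}" using bij_betw_imp_surj_on[OF bP] rank_image[OF fW] cW by simp
    also have "\<dots> = {1..k}" by (simp add: lessThan_atLeast0 atLeastLessThanSuc_atLeastAtMost)
    finally show ?thesis .
  qed
  have dphi: "distinct (map fst phi)" using mfphi injc sidx by (simp add: distinct_map)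
  have bnd: "\<forall>i\<in>set idx. i < length ?psi" unfolding sidx(1) P_def by blast
  have colphi: "\<forall>p\<in>set phi. snd p \<in> {1..r}"
  proof
    fix p assume "p \<in> set phi"
    then obtain i where "i \<in> set idx" "p = g i" unfolding phi_def by auto
    then have "?psi ! i \<in> set ?psi" "snd p = snd (?psi ! i)" using bnd by (auto simp: g_def simp del: list.set)
    then show "snd p \<in> {1..r}" using col by metis
  qed
  have phiC: "phi \<in> coloured_perms k r"
    unfolding coloured_perms_def using lphi setphi dphi colphi by blast
  have "hd phi = g 0" using idx0 by (simp add: phi_def)
  moreover have "rank W x = m - 1" unfolding rank_def WA using A(2) .
  ultimately have hd: "hd phi = (m, c)" using m1 by (simp add: g_def f_def)
  have "phi \<in> T_set k r m I" unfolding T_set_def using phiC hd cI mk m1 by auto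
  moreover have "occurrence phi ?psi idx"
    unfolding occurrence_def
  proof (intro conjI)
    show "length idx = length phi" using lphi sidx by simp
    show "sorted_wrt (<) idx" using sidx by simp
    show "\<forall>i\<in>set idx. i < length ?psi" using bnd .
    show "order_iso (map (\<lambda>i. fst (?psi ! i)) idx) (map fst phi)"
      unfolding order_iso_def
    proof (intro conjI allI impI)
      show "length (map (\<lambda>i. fst (?psi ! i)) idx) = length (map fst phi)" using lphi sidx by simp
      fix i j assume ij: "i < length (map (\<lambda>i. fst (?psi ! i)) idx)" "j < length (map (\<lambda>i. fst (?psi ! i)) idx)"
      then have "i < length idx" "j < length idx" by simp_all
      then have "idx ! i \<in> set idx" "idx ! j \<in> set idx" by (metis nth_mem)+
      then have "idx ! i \<in> P" "idx ! j \<in> P" using sidx(1) by blast+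
      then have "f (idx ! i) \<in> W" "f (idx ! j) \<in> W" unfolding P_def by auto
      then show "(map (\<lambda>i. fst (?psi ! i)) idx ! i < map (\<lambda>i. fst (?psi ! i)) idx ! j) =
            (map fst phi ! i < map fst phi ! j)"
      proof -
        have "map (\<lambda>i. fst (?psi ! i)) idx ! i = f (idx ! i)" "map (\<lambda>i. fst (?psi ! i)) idx ! j = f (idx ! j)"
          using \<open>i < length idx\<close> \<open>j < length idx\<close> by (simp_all add: f_def)
        moreover have "map fst phi ! i = Suc (rank W (f (idx ! i)))" "map fst phi ! j = Suc (rank W (f (idx ! j)))"
          using \<open>i < length idx\<close> \<open>j < length idx\<close> by (simp_all add: phi_def g_def)
        ultimately show ?thesis using rank_less_iff[OF fW \<open>f (idx ! i) \<in> W\<close> \<open>f (idx ! j) \<in> W\<close>] by simp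
      qed
    qed
    show "\<forall>j<length phi. snd (?psi ! (idx ! j)) = snd (phi ! j)"
      using lphi sidx(3) by (simp add: phi_def g_def)
  qed
  ultimately show ?thesis unfolding contains_def by blast
qed



definition containsT :: "nat \<Rightarrow> nat \<Rightarrow> nat \<Rightarrow> nat set \<Rightarrow> (nat \<times> nat) list \<Rightarrow> bool" where
  "containsT k r m I psi \<longleftrightarrow> (\<exists>phi\<in>T_set k r m I. contains psi phi)"

lemma char:
  assumes dist: "distinct (map fst ((x,c)#rest))"
  and col: "\<forall>p\<in>set ((x,c)#rest). snd p \<in> {1..r}"
  and m1: "1 \<le> m" and mk: "m \<le> k"
  shows "containsT k r m I ((x,c)#rest) \<longleftrightarrow> containsT k r m I rest \<or>
     (c \<in> I \<and> m - 1 \<le> card {y\<in>fst ` set rest. y < x} \<and> k - m \<le> card {y\<in>fst ` set rest. x < y})"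
proof
  let ?psi = "(x,c)#rest"
  assume "containsT k r m I ?psi"
  then obtain phi where phiT: "phi \<in> T_set k r m I" and "contains ?psi phi"
    unfolding containsT_def by blast
  then obtain idx where occ: "occurrence phi ?psi idx" unfolding contains_def by blast
  have phiC: "phi \<in> coloured_perms k r" and k1: "k \<ge> 1" and hd1: "fst (hd phi) = m" and hd2: "snd (hd phi) \<in> I"
    using phiT unfolding T_set_def by auto
  have lens: "length phi = k" "length idx = k" using phiC occ unfolding coloured_perms_def occurrence_def by auto
  have srt: "sorted_wrt (<) idx" using occ unfolding occurrence_def by auto
  show "containsT k r m I rest \<or>
     (c \<in> I \<and> m - 1 \<le> card {y\<in>fst ` set rest. y < x} \<and> k - m \<le> card {y\<in>fst ` set rest. x < y})"
  proof (cases "idx ! 0 = 0")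
    case True
    have "snd (?psi ! (idx ! 0)) = snd (phi ! 0)" using occ lens k1 unfolding occurrence_def by auto
    moreover have "phi \<noteq> []" using lens k1 by auto
    ultimately have "c \<in> I" using True hd2 by (simp add: hd_conv_nth)
    moreover have "m - 1 \<le> card {y\<in>fst ` set rest. y < x} \<and> k - m \<le> card {y\<in>fst ` set rest. x < y}"
      by (rule count_from_occ[OF dist phiC hd1 k1 mk occ True])
    ultimately show ?thesis by blast
  next
    case False
    have "\<forall>i\<in>set idx. i \<noteq> 0"
    proof
      fix i assume "i \<in> set idx"
      then obtain j where j: "j < length idx" "i = idx ! j" by (metis in_set_conv_nth)
      show "i \<noteq> 0"
      proof (cases "j = 0")
        case True then show ?thesis using j False by simp
      next
        case False
        then have "idx ! 0 < idx ! j" using sorted_wrt_nth_less[OF srt, of 0 j] j by simp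
        then show ?thesis using j by simp
      qed
    qed
    then have "occurrence phi rest (map (\<lambda>i. i - 1) idx)" by (rule occ_unshift[OF occ])
    then show ?thesis using phiT unfolding containsT_def contains_def by blast
  qed
next
  let ?psi = "(x,c)#rest"
  assume "containsT k r m I rest \<or>
     (c \<in> I \<and> m - 1 \<le> card {y\<in>fst ` set rest. y < x} \<and> k - m \<le> card {y\<in>fst ` set rest. x < y})"
  then show "containsT k r m I ?psi"
  proof
    assume "containsT k r m I rest"
    then show ?thesis unfolding containsT_def contains_def using occ_shift by blast
  next
    assume "c \<in> I \<and> m - 1 \<le> card {y\<in>fst ` set rest. y < x} \<and> k - m \<le> card {y\<in>fst ` set rest. x < y}"
    then show ?thesis unfolding containsT_def using occ_from_count[OF dist col _ m1 mk] by blast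
  qed
qed



definition Av :: "nat \<Rightarrow> nat \<Rightarrow> nat \<Rightarrow> nat set \<Rightarrow> nat set \<Rightarrow> (nat \<times> nat) list set" where
  "Av k r m I S = {psi. distinct (map fst psi) \<and> set (map fst psi) = S \<and>
      (\<forall>p\<in>set psi. snd p \<in> {1..r}) \<and> \<not> containsT k r m I psi}"

definition goodx :: "nat \<Rightarrow> nat \<Rightarrow> nat set \<Rightarrow> nat \<Rightarrow> bool" where
  "goodx k m S x \<longleftrightarrow> card {y\<in>S. y < x} < m - 1 \<or> card {y\<in>S. x < y} < k - m"

definition Good :: "nat \<Rightarrow> nat \<Rightarrow> nat \<Rightarrow> nat set \<Rightarrow> nat set \<Rightarrow> (nat \<times> nat) set" where
  "Good k r m I S = {(x,c). x \<in> S \<and> c \<in> {1..r} \<and> (c \<notin> I \<or> goodx k m S x)}"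

lemma finite_Av: "finite S \<Longrightarrow> finite (Av k r m I S)"
proof -
  assume fS: "finite S"
  have "Av k r m I S \<subseteq> {xs. set xs \<subseteq> S \<times> {1..r} \<and> length xs = card S}"
  proof
    fix psi assume "psi \<in> Av k r m I S"
    then have "distinct (map fst psi)" "set (map fst psi) = S" "\<forall>p\<in>set psi. snd p \<in> {1..r}"
      unfolding Av_def by auto
    moreover from this have "length psi = card S" by (metis distinct_card length_map)
    ultimately show "psi \<in> {xs. set xs \<subseteq> S \<times> {1..r} \<and> length xs = card S}" by force
  qed
  moreover have "finite {xs. set xs \<subseteq> S \<times> {1..r} \<and> length xs = card S}"
    using fS by (intro finite_lists_length_eq) auto
  ultimately show ?thesis by (rule finite_subset)
qed

lemma Av_decomp:
  assumes fS: "finite S" and ne: "S \<noteq> {}" and m1: "1 \<le> m" and mk: "m \<le> k"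
  shows "Av k r m I S = (\<lambda>(p,rest). p # rest) ` (SIGMA p:Good k r m I S. Av k r m I (S - {fst p}))"
proof
  show "Av k r m I S \<subseteq> (\<lambda>(p,rest). p # rest) ` (SIGMA p:Good k r m I S. Av k r m I (S - {fst p}))"
  proof
    fix psi assume psi: "psi \<in> Av k r m I S"
    then have d: "distinct (map fst psi)" and st: "set (map fst psi) = S"
      and col: "\<forall>p\<in>set psi. snd p \<in> {1..r}" and nc: "\<not> containsT k r m I psi"
      unfolding Av_def by auto
    obtain x c rest where pe: "psi = (x,c) # rest" using st ne by (cases psi) auto
    have xr: "x \<notin> fst ` set rest" using d pe by auto
    have Srest: "S = insert x (fst ` set rest)" using st pe by auto
    have ch: "containsT k r m I ((x,c)#rest) \<longleftrightarrow> containsT k r m I rest \<or>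
     (c \<in> I \<and> m - 1 \<le> card {y\<in>fst ` set rest. y < x} \<and> k - m \<le> card {y\<in>fst ` set rest. x < y})"
      by (rule char) (use d col pe m1 mk in auto)
    have e1: "{y\<in>S. y < x} = {y\<in>fst ` set rest. y < x}" "{y\<in>S. x < y} = {y\<in>fst ` set rest. x < y}"
      using Srest by auto
    have xS: "x \<in> S" and cr: "c \<in> {1..r}" using Srest col pe by auto
    have "\<not> containsT k r m I ((x,c)#rest)" using nc pe by simp
    then have "c \<notin> I \<or> card {y\<in>S. y < x} < m - 1 \<or> card {y\<in>S. x < y} < k - m"
      unfolding e1 using ch by (auto simp: not_le)
    then have "(x,c) \<in> Good k r m I S"
      using xS cr unfolding Good_def goodx_def by auto
    moreover have "rest \<in> Av k r m I (S - {x})"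
      unfolding Av_def using d pe col nc ch Srest xr by auto
    ultimately show "psi \<in> (\<lambda>(p,rest). p # rest) ` (SIGMA p:Good k r m I S. Av k r m I (S - {fst p}))"
      using pe by force
  qed
next
  show "(\<lambda>(p,rest). p # rest) ` (SIGMA p:Good k r m I S. Av k r m I (S - {fst p})) \<subseteq> Av k r m I S"
  proof
    fix psi assume "psi \<in> (\<lambda>(p,rest). p # rest) ` (SIGMA p:Good k r m I S. Av k r m I (S - {fst p}))"
    then obtain x c rest where pe: "psi = (x,c) # rest" and g: "(x,c) \<in> Good k r m I S"
      and ra: "rest \<in> Av k r m I (S - {x})" by auto
    have xS: "x \<in> S" and cr: "c \<in> {1..r}" and gd: "c \<notin> I \<or> goodx k m S x"
      using g unfolding Good_def by auto
    have d: "distinct (map fst rest)" and st: "set (map fst rest) = S - {x}"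
      and col: "\<forall>p\<in>set rest. snd p \<in> {1..r}" and nc: "\<not> containsT k r m I rest"
      using ra unfolding Av_def by auto
    have Srest: "S = insert x (fst ` set rest)" using st xS by auto
    have d2: "distinct (map fst ((x,c)#rest))" using d st by auto
    have col2: "\<forall>p\<in>set ((x,c)#rest). snd p \<in> {1..r}" using col cr by auto
    have ch: "containsT k r m I ((x,c)#rest) \<longleftrightarrow> containsT k r m I rest \<or>
     (c \<in> I \<and> m - 1 \<le> card {y\<in>fst ` set rest. y < x} \<and> k - m \<le> card {y\<in>fst ` set rest. x < y})"
      by (rule char[OF d2 col2 m1 mk])
    have e1: "{y\<in>S. y < x} = {y\<in>fst ` set rest. y < x}" "{y\<in>S. x < y} = {y\<in>fst ` set rest. x < y}"
      using Srest by auto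
    have "\<not> containsT k r m I ((x,c)#rest)"
      using ch nc gd unfolding goodx_def e1 by (auto simp: not_le)
    then show "psi \<in> Av k r m I S"
      unfolding Av_def using pe d2 col2 Srest by auto
  qed
qed

lemma card_Av_step:
  assumes fS: "finite S" and ne: "S \<noteq> {}" and m1: "1 \<le> m" and mk: "m \<le> k"
  shows "card (Av k r m I S) = (\<Sum>p\<in>Good k r m I S. card (Av k r m I (S - {fst p})))"
proof -
  have inj: "inj_on (\<lambda>(p,rest). p # rest) (SIGMA p:Good k r m I S. Av k r m I (S - {fst p}))"
    by (auto simp: inj_on_def)
  have fG: "finite (Good k r m I S)"
  proof -
    have "Good k r m I S \<subseteq> S \<times> {1..r}" unfolding Good_def by auto
    then show ?thesis using fS by (meson finite_SigmaI finite_atLeastAtMost finite_subset)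
  qed
  show ?thesis
    unfolding Av_decomp[OF fS ne m1 mk] card_image[OF inj]
    using fG fS finite_Av by (subst card_SigmaI) auto
qed

lemma count_arith:
  assumes m1: "1 \<le> (m::nat)" and mk: "m \<le> k"
  shows "card {t\<in>{..<N}. t < m - 1 \<or> N - 1 - t < k - m} = min N (k - 1)"
proof (cases "N < k")
  case True
  then have "{t\<in>{..<N}. t < m - 1 \<or> N - 1 - t < k - m} = {..<N}" by auto
  then show ?thesis using True by simp
next
  case False
  then have "{t\<in>{..<N}. t < m - 1 \<or> N - 1 - t < k - m} = {..<m-1} \<union> {N + m - k..<N}"
    using m1 mk by auto
  moreover have "{..<m-1} \<inter> {N + m - k..<N} = {}" using False m1 mk by auto
  ultimately have "card {t\<in>{..<N}. t < m - 1 \<or> N - 1 - t < k - m} = (m - 1) + (N - (N + m - k))"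
    by (simp add: card_Un_disjoint)
  then show ?thesis using False m1 mk by simp
qed

lemma card_goodx:
  assumes fS: "finite S" and m1: "1 \<le> m" and mk: "m \<le> k"
  shows "card {x\<in>S. goodx k m S x} = min (card S) (k - 1)"
proof -
  have gt: "card {y\<in>S. x < y} = card S - 1 - rank S x" if "x \<in> S" for x
  proof -
    have e: "S = insert x ({y\<in>S. y < x} \<union> {y\<in>S. x < y})" using that by auto
    have c1: "card (insert x ({y\<in>S. y < x} \<union> {y\<in>S. x < y})) = Suc (card ({y\<in>S. y < x} \<union> {y\<in>S. x < y}))"
      by (rule card_insert_disjoint) (use fS in auto)
    have c2: "card ({y\<in>S. y < x} \<union> {y\<in>S. x < y}) = card {y\<in>S. y < x} + card {y\<in>S. x < y}"
      by (rule card_Un_disjoint) (use fS in auto)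
    have "card S = card (insert x ({y\<in>S. y < x} \<union> {y\<in>S. x < y}))" using arg_cong[OF e, of card] .
    then have "card S = card {y\<in>S. y < x} + (1 + card {y\<in>S. x < y})" using c1 c2 by simp
    then show ?thesis unfolding rank_def by simp
  qed
  have "{x\<in>S. goodx k m S x} = {x\<in>S. (\<lambda>t. t < m - 1 \<or> card S - 1 - t < k - m) (rank S x)}"
    using gt unfolding goodx_def rank_def by auto
  then have "card {x\<in>S. goodx k m S x} = card {t\<in>{..<card S}. t < m - 1 \<or> card S - 1 - t < k - m}"
    using bij_filter_card[OF rank_bij[OF fS]] by simp
  then show ?thesis using count_arith[OF m1 mk] by simp
qed

lemma card_Good:
  assumes fS: "finite S" and m1: "1 \<le> m" and mk: "m \<le> k" and Ir: "I \<subseteq> {1..r}"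
  shows "card (Good k r m I S) = (r - card I) * card S + card I * min (card S) (k - 1)"
proof -
  have "Good k r m I S = (S \<times> ({1..r} - I)) \<union> ({x\<in>S. goodx k m S x} \<times> I)"
    using Ir unfolding Good_def by auto
  moreover have "(S \<times> ({1..r} - I)) \<inter> ({x\<in>S. goodx k m S x} \<times> I) = {}" by auto
  moreover have fI: "finite I" using Ir finite_subset by blast
  ultimately have "card (Good k r m I S) = card S * card ({1..r} - I) + card {x\<in>S. goodx k m S x} * card I"
    using fS by (simp add: card_Un_disjoint card_cartesian_product)
  moreover have "card ({1..r} - I) = r - card I" using Ir fI by (simp add: card_Diff_subset)
  ultimately show ?thesis using card_goodx[OF fS m1 mk] by (simp add: mult.commute)
qed

lemma card_Av:
  assumes m1: "1 \<le> m" and mk: "m \<le> k" and Ir: "I \<subseteq> {1..r}"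
  shows "finite S \<Longrightarrow> card S = n \<Longrightarrow>
    card (Av k r m I S) = (\<Prod>L=1..n. (r - card I) * L + card I * min L (k - 1))"
proof (induction n arbitrary: S)
  case 0
  then have S: "S = {}" by simp
  have "Av k r m I S = {[]}"
  proof -
    have "\<not> containsT k r m I []"
    proof
      assume "containsT k r m I []"
      then obtain phi where phiT: "phi \<in> T_set k r m I" and "contains [] phi"
        unfolding containsT_def by blast
      then obtain idx where occ: "occurrence phi [] idx" unfolding contains_def by blast
      have "length idx = length phi" "\<forall>i\<in>set idx. i < length ([]::(nat\<times>nat) list)"
        using occ unfolding occurrence_def by auto
      then have "length phi = 0" by (cases idx) auto
      moreover have "length phi = k" "k \<ge> 1" using phiT unfolding T_set_def coloured_perms_def by auto
      ultimately show False by simp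
    qed
    then show ?thesis unfolding Av_def S by auto
  qed
  then show ?case by simp
next
  case (Suc n)
  have ne: "S \<noteq> {}" using Suc.prems(2) by auto
  have "card (Av k r m I S) = (\<Sum>p\<in>Good k r m I S. card (Av k r m I (S - {fst p})))"
    by (rule card_Av_step[OF Suc.prems(1) ne m1 mk])
  also have "\<dots> = (\<Sum>p\<in>Good k r m I S. (\<Prod>L=1..n. (r - card I) * L + card I * min L (k - 1)))"
  proof (rule sum.cong)
    fix p assume "p \<in> Good k r m I S"
    then have "fst p \<in> S" unfolding Good_def by auto
    then show "card (Av k r m I (S - {fst p})) = (\<Prod>L=1..n. (r - card I) * L + card I * min L (k - 1))"
      using Suc.IH[of "S - {fst p}"] Suc.prems by simp
  qed simp
  also have "\<dots> = card (Good k r m I S) * (\<Prod>L=1..n. (r - card I) * L + card I * min L (k - 1))"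
    by simp
  also have "\<dots> = (\<Prod>L=1..Suc n. (r - card I) * L + card I * min L (k - 1))"
  proof -
    have cg: "card (Good k r m I S) = (r - card I) * Suc n + card I * min (Suc n) (k - 1)"
      using card_Good[OF Suc.prems(1) m1 mk Ir] Suc.prems(2) by simp
    have pr: "(\<Prod>L=1..Suc n. (r - card I) * L + card I * min L (k - 1)) =
       (\<Prod>L=1..n. (r - card I) * L + card I * min L (k - 1)) * ((r - card I) * Suc n + card I * min (Suc n) (k - 1))"
      by (simp only: prod.cl_ivl_Suc) simp
    show ?thesis unfolding cg pr by (rule mult.commute)
  qed
  finally show ?case .
qed


lemma final_arith:
  fixes k r d n :: nat
  assumes k1: "k \<ge> 1" and dr: "d \<le> r" and nk: "n \<ge> k"
  shows "(\<Prod>L=1..n. (r - d) * L + d * min L (k - 1)) =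
    fact (k - 1) * r ^ (k - 1) * (\<Prod>j = k..n. (r - d) * j + (k - 1) * d)"
proof -
  let ?G = "\<lambda>L. (r - d) * L + d * min L (k - 1)"
  have split: "{1..n} = {1..k-1} \<union> {k..n}" using k1 nk by auto
  have disj: "{1..k-1} \<inter> {k..n} = {}" using k1 by auto
  have "(\<Prod>L=1..n. ?G L) = (\<Prod>L=1..k-1. ?G L) * (\<Prod>L=k..n. ?G L)"
    unfolding split by (rule prod.union_disjoint) (use disj in auto)
  moreover have "(\<Prod>L=1..k-1. ?G L) = (\<Prod>L=1..k-1. r * L)"
  proof (rule prod.cong)
    fix L assume "L \<in> {1..k-1}"
    then have "min L (k - 1) = L" by auto
    moreover obtain e where "r = d + e" using dr le_Suc_ex by blast
    ultimately show "?G L = r * L" by (simp add: algebra_simps)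
  qed simp
  moreover have "(\<Prod>L=1..k-1. r * L) = r ^ (k - 1) * fact (k - 1)"
    by (simp add: prod.distrib fact_prod)
  moreover have "(\<Prod>L=k..n. ?G L) = (\<Prod>j = k..n. (r - d) * j + (k - 1) * d)"
  proof (rule prod.cong)
    fix L assume "L \<in> {k..n}"
    then have "min L (k - 1) = k - 1" by auto
    then show "?G L = (r - d) * L + (k - 1) * d" by (simp add: mult.commute)
  qed simp
  ultimately show ?thesis by (simp add: mult.commute mult.left_commute)
qed

theorem theorem1:
  fixes k r m d n :: nat and I :: "nat set"
  assumes "k \<ge> 1" "r \<ge> 1" "1 \<le> m" "m \<le> k" "1 \<le> d" "d \<le> r"
    and "I \<subseteq> {1..r}" "card I = d" "n \<ge> k"
  shows "card (avoiding n r (T_set k r m I)) =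
           fact (k - 1) * r ^ (k - 1) * (\<Prod>j = k..n. (r - d) * j + (k - 1) * d)"
proof -
  have len: "length psi = n" if "distinct (map fst psi)" "set (map fst psi) = {1..n}" for psi :: "(nat \<times> nat) list"
    using distinct_card[OF that(1)] that(2) by simp
  have eq: "avoiding n r (T_set k r m I) = Av k r m I {1..n}"
    unfolding avoiding_def Av_def coloured_perms_def containsT_def using len by auto
  have "card (Av k r m I {1..n}) = (\<Prod>L=1..n. (r - card I) * L + card I * min L (k - 1))"
    by (rule card_Av[OF assms(3,4,7)]) simp_all
  then show ?thesis unfolding eq using final_arith[OF assms(1,6,9)] assms(8) by simp
qed

end
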